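(* Let $L \subset \mathbb{P}^r$ be a line, $H \subset \mathbb{P}^r$ a hyperplane transverse to $L$, and $R \subset H$ a rational normal curve (of degree $r-1$ in $H$). Let $V \subset H^0(\mathcal{I}_{L\cup R}(2))$ be a nonzero linear series of quadrics containing $L \cup R$. Assume (a) no element of $V$ is a reducible quadric containing $H$, and (b) a general element $Q_{\mathrm{gen}}$ of $V$ satisfies $L \not\subset \mathrm{Sing}\, Q_{\mathrm{gen}}$. Then for general choices of $p \in L$ and $q \in R$, letting $L_{\mathrm{gen}} := \overline{pq}$ be the line through them: (i) $L_{\mathrm{gen}}$ is not contained in $Q_{\mathrm{gen}}$; (ii) among the quadrics $Q \in V$ containing $L_{\mathrm{gen}}$, a general one does not contain $L_{\mathrm{gen}}$ in its singular locus.
   Context: Work over an algebraically closed field of characteristic $0$. $\mathcal{I}_{L\cup R}$ denotes the ideal sheaf of $L \cup R$ in $\mathbb{P}^r$; elements of $H^0(\mathcal{I}_{L\cup R}(2))$ are identified (up to scalar) with quadric hypersurfaces containing $L\cup R$. *)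

theory Defs
  imports "HOL-Analysis.Analysis" "HOL-Computational_Algebra.Polynomial"
begin

text \<open>Projective space P^r is modelled by the vector space 'k^'n with CARD('n) = r+1;
  projective points/subvarieties are represented by their affine cones.
  A quadric is a nonzero symmetric matrix A; its equation is the quadratic form qf A.\<close>

definition alg_closed_field :: "'k::field itself \<Rightarrow> bool" where
  "alg_closed_field _ \<longleftrightarrow> (\<forall>p::'k poly. degree p > 0 \<longrightarrow> (\<exists>x. poly p x = 0))"

definition linf :: "'k::comm_ring_1 ^'n \<Rightarrow> 'k^'n \<Rightarrow> 'k" where
  "linf h v = (\<Sum>i\<in>UNIV. h$i * v$i)"

definition qf :: "'k::comm_ring_1 ^'n^'n \<Rightarrow> 'k^'n \<Rightarrow> 'k" where
  "qf A v = (\<Sum>i\<in>UNIV. \<Sum>j\<in>UNIV. A$i$j * v$i * v$j)"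

definition symmetric_mat :: "'k::comm_ring_1 ^'n^'n \<Rightarrow> bool" where
  "symmetric_mat A \<longleftrightarrow> transpose A = A"

definition smult_mat :: "'k::comm_ring_1 \<Rightarrow> 'k^'n^'n \<Rightarrow> 'k^'n^'n" where
  "smult_mat c A = (\<chi> i j. c * A$i$j)"

definition zeroset :: "'k::comm_ring_1 ^'n^'n \<Rightarrow> ('k^'n) set" where
  "zeroset A = {v. qf A v = 0}"

text \<open>Singular locus (affine cone) of the quadric qf A, A symmetric: the common zeros of
  all partial derivatives, which are the entries of 2 A v (characteristic 0).\<close>
definition sing :: "'k::comm_ring_1 ^'n^'n \<Rightarrow> ('k^'n) set" where
  "sing A = {v. A *v v = 0}"

definition indep2 :: "'k::comm_ring_1 ^'n \<Rightarrow> 'k^'n \<Rightarrow> bool" where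
  "indep2 x y \<longleftrightarrow> (\<forall>a b. a *s x + b *s y = 0 \<longrightarrow> a = 0 \<and> b = 0)"

definition line_span :: "'k::comm_ring_1 ^'n \<Rightarrow> 'k^'n \<Rightarrow> ('k^'n) set" where
  "line_span x y = {a *s x + b *s y | a b. True}"

text \<open>Parametrization of a rational normal curve of degree d = r-1 in the hyperplane H,
  given a basis w 0, ..., w (d) of (the cone over) H.\<close>
definition rnc_pt :: "(nat \<Rightarrow> 'k::comm_ring_1 ^'n) \<Rightarrow> nat \<Rightarrow> 'k \<Rightarrow> 'k \<Rightarrow> 'k^'n" where
  "rnc_pt w d c e = (\<Sum>j\<le>d. (c ^ (d - j) * e ^ j) *s w j)"

definition rnc_set :: "(nat \<Rightarrow> 'k::comm_ring_1 ^'n) \<Rightarrow> nat \<Rightarrow> ('k^'n) set" where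
  "rnc_set w d = {rnc_pt w d c e | c e. True}"

inductive_set polyfun :: "('a \<Rightarrow> 'k::comm_ring_1) set \<Rightarrow> ('a \<Rightarrow> 'k) set" for C where
  const: "(\<lambda>_. c) \<in> polyfun C"
| coord: "f \<in> C \<Longrightarrow> f \<in> polyfun C"
| add: "f \<in> polyfun C \<Longrightarrow> g \<in> polyfun C \<Longrightarrow> (\<lambda>x. f x + g x) \<in> polyfun C"
| mult: "f \<in> polyfun C \<Longrightarrow> g \<in> polyfun C \<Longrightarrow> (\<lambda>x. f x * g x) \<in> polyfun C"

definition mat_coords :: "('k^'n^'n \<Rightarrow> 'k) set" where
  "mat_coords = {(\<lambda>A. A$i$j) | i j. True}"

definition quad_coords :: "('k \<times> 'k \<times> 'k \<times> 'k \<Rightarrow> 'k) set" where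
  "quad_coords = {(\<lambda>(a,b,c,d). a), (\<lambda>(a,b,c,d). b), (\<lambda>(a,b,c,d). c), (\<lambda>(a,b,c,d). d)}"

text \<open>A general (nonzero) element of a linear system W of quadrics satisfies P:
  P holds on a nonempty Zariski-open subset of W (vacuous if W has no nonzero element).\<close>
definition general_in :: "('k::comm_ring_1 ^'n^'n) set \<Rightarrow> ('k^'n^'n \<Rightarrow> bool) \<Rightarrow> bool" where
  "general_in W P \<longleftrightarrow> (\<exists>f\<in>polyfun mat_coords.
      (W \<subseteq> {0} \<or> (\<exists>A\<in>W. f A \<noteq> 0)) \<and> (\<forall>A\<in>W. A \<noteq> 0 \<longrightarrow> f A \<noteq> 0 \<longrightarrow> P A))"

definition general_param :: "('k::comm_ring_1 \<times> 'k \<times> 'k \<times> 'k \<Rightarrow> bool) \<Rightarrow> bool" where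
  "general_param P \<longleftrightarrow> (\<exists>g\<in>polyfun quad_coords. (\<exists>x. g x \<noteq> 0) \<and> (\<forall>x. g x \<noteq> 0 \<longrightarrow> P x))"

end

theory Submission
  imports Defs
begin


lemma linf_add_left: "linf (x + y) z = linf x z + linf y z"
  by (simp add: linf_def distrib_right sum.distrib)
lemma linf_add_right: "linf z (x + y) = linf z x + linf z y"
  by (simp add: linf_def distrib_left sum.distrib)
lemma linf_smult_left: "linf (a *s x) z = a * linf x z"
  by (simp add: linf_def sum_distrib_left mult.assoc)
lemma linf_smult_right: "linf z (a *s x) = a * linf z x"
  by (simp add: linf_def sum_distrib_left mult.left_commute)
lemma linf_zero_right[simp]: "linf z 0 = 0"
  by (simp add: linf_def)
lemma linf_zero_left[simp]: "linf 0 z = 0"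
  by (simp add: linf_def)
lemma linf_sum_right: "linf z (\<Sum>j\<in>S. f j) = (\<Sum>j\<in>S. linf z (f j))"
  by (simp add: linf_def sum_distrib_left sum.swap[of _ S])

lemma mv_smult: "A *v (c *s x) = c *s (A *v (x::'k::comm_ring_1^'n))"
  by (simp add: vec_eq_iff matrix_vector_mult_def sum_distrib_left mult.left_commute)

lemma mv_sum: "A *v (\<Sum>j\<in>S. f j) = (\<Sum>j\<in>S. A *v (f j::'k::comm_ring_1^'n))"
proof (cases "finite S")
  case True then show ?thesis by (induction S rule: finite_induct) (simp_all add: matrix_vector_right_distrib)
qed simp

lemma smult_mat_mv: "smult_mat c A *v x = c *s (A *v (x::'k::comm_ring_1^'n))"
  by (simp add: vec_eq_iff matrix_vector_mult_def smult_mat_def sum_distrib_left mult.assoc)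

lemma qf_linf: "qf A v = linf v (A *v v)"
  unfolding qf_def linf_def matrix_vector_mult_def
  by (simp add: sum_distrib_left) (intro sum.cong refl, simp add: mult_ac)

lemma sym_entry: "symmetric_mat A \<Longrightarrow> A$j$i = A$i$j"
  unfolding symmetric_mat_def by (metis transpose_def vec_lambda_beta)

lemma sym_swap: "symmetric_mat A \<Longrightarrow> linf x (A *v y) = linf y (A *v x)"
proof -
  assume sA: "symmetric_mat A"
  have "linf x (A *v y) = (\<Sum>i\<in>UNIV. \<Sum>j\<in>UNIV. x$i * A$i$j * y$j)"
    unfolding linf_def matrix_vector_mult_def
    by (simp add: sum_distrib_left) (intro sum.cong refl, simp add: mult_ac)
  also have "\<dots> = (\<Sum>j\<in>UNIV. \<Sum>i\<in>UNIV. x$i * A$i$j * y$j)" by (rule sum.swap)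
  also have "\<dots> = linf y (A *v x)"
    unfolding linf_def matrix_vector_mult_def
    by (simp add: sum_distrib_left) (intro sum.cong refl, simp add: sym_entry[OF sA, of _ j for j] mult_ac)
  finally show ?thesis .
qed

lemma qf_comb: "symmetric_mat A \<Longrightarrow>
  qf A (a *s x + b *s y) = a^2 * qf A x + 2*a*b * linf x (A *v y) + b^2 * qf A y"
  by (simp add: qf_linf matrix_vector_right_distrib mv_smult linf_add_left linf_add_right
      linf_smult_left linf_smult_right sym_swap[of A y x] algebra_simps power2_eq_square)

lemma linf_axis: "linf (axis i 1) y = y $ i"
  proof -
  have "linf (axis i 1) y = (\<Sum>j\<in>UNIV. if j = i then y $ j else 0)"
    unfolding linf_def by (rule sum.cong) (auto simp: axis_def)
  then show ?thesis by simp
qed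

lemma linf_all_zero: "(\<And>v. linf v y = 0) \<Longrightarrow> y = 0"
  by (metis linf_axis vec_eq_iff zero_index)

lemma rnc_linf: "linf p (A *v rnc_pt w d c e) = (\<Sum>j\<le>d. c^(d-j)*e^j * linf p (A *v w j))"
  by (simp add: rnc_pt_def mv_sum mv_smult linf_sum_right linf_smult_right)

lemma rnc_comp: "(A *v rnc_pt w d c e) $ k = (\<Sum>j\<le>d. c^(d-j)*e^j * (A *v w j) $ k)"
  by (simp add: rnc_pt_def mv_sum mv_smult)

lemma span_linf: "v \<in> vec.span (w ` S) \<Longrightarrow> (\<And>j. j\<in>S \<Longrightarrow> linf y (w j) = 0) \<Longrightarrow> linf y v = 0"
proof -
  assume v: "v \<in> vec.span (w ` S)" and h: "\<And>j. j\<in>S \<Longrightarrow> linf y (w j) = 0"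
  show ?thesis using v
    by (induction rule: vec.span_induct_alt) (auto simp: h linf_add_right linf_smult_right)
qed

lemma span_mv: "v \<in> vec.span (w ` S) \<Longrightarrow> (\<And>j. j\<in>S \<Longrightarrow> A *v w j = 0) \<Longrightarrow> A *v (v::'k::field^'n) = 0"
proof -
  assume v: "v \<in> vec.span (w ` S)" and h: "\<And>j. j\<in>S \<Longrightarrow> A *v w j = 0"
  show ?thesis using v
    by (induction rule: vec.span_induct_alt) (auto simp: h matrix_vector_right_distrib mv_smult)
qed



lemma pf_sum: "finite S \<Longrightarrow> (\<And>s. s \<in> S \<Longrightarrow> f s \<in> polyfun C) \<Longrightarrow> (\<lambda>x. \<Sum>s\<in>S. f s x) \<in> polyfun C"
proof (induction S rule: finite_induct)
  case empty then show ?case by (simp add: polyfun.const)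
next
  case (insert a F) then show ?case by (simp add: polyfun.add)
qed

lemma pf_pow: "f \<in> polyfun C \<Longrightarrow> (\<lambda>x. f x ^ n) \<in> polyfun C"
proof (induction n)
  case 0 then show ?case by (simp add: polyfun.const)
next
  case (Suc n) then show ?case using polyfun.mult[OF Suc(2) Suc.IH[OF Suc(2)]] by simp
qed

lemma pf_cmult: "f \<in> polyfun C \<Longrightarrow> (\<lambda>x. c * f x) \<in> polyfun C"
  using polyfun.mult[OF polyfun.const] by blast

lemma pf_mult: "f \<in> polyfun C \<Longrightarrow> g \<in> polyfun C \<Longrightarrow> (\<lambda>x. f x * g x) \<in> polyfun C"
  by (rule polyfun.mult)

lemma pf_diff: "f \<in> polyfun C \<Longrightarrow> g \<in> polyfun (C::('a \<Rightarrow> 'k::comm_ring_1) set) \<Longrightarrow> (\<lambda>x. f x - g x) \<in> polyfun C"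
proof -
  assume "f \<in> polyfun C" "g \<in> polyfun C"
  then have "(\<lambda>x. f x + (-1) * g x) \<in> polyfun C" by (intro polyfun.add pf_cmult)
  then show ?thesis by simp
qed

lemma pf_linf: "(\<And>i. (\<lambda>x. X x $ i) \<in> polyfun C) \<Longrightarrow> (\<And>i. (\<lambda>x. Y x $ i) \<in> polyfun C) \<Longrightarrow> (\<lambda>x. linf (X x) (Y x)) \<in> polyfun C"
  unfolding linf_def by (intro pf_sum pf_mult) auto

lemma pf_mv: "(\<And>i. (\<lambda>x. Y x $ i) \<in> polyfun C) \<Longrightarrow> (\<lambda>x. (A *v Y x) $ i) \<in> polyfun C"
  unfolding matrix_vector_mult_def by (simp, intro pf_sum pf_cmult) auto

lemma pf_mat_entry: "(\<lambda>A. A $ i $ j) \<in> polyfun mat_coords"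
  by (rule polyfun.coord) (auto simp: mat_coords_def)

lemma pf_mat_mv: "(\<lambda>A::'k::comm_ring_1^'n^'n. (A *v y) $ i) \<in> polyfun mat_coords"
  unfolding matrix_vector_mult_def by (simp, intro pf_sum pf_mult pf_mat_entry polyfun.const) auto

lemma pf_mat_phi: "(\<lambda>A::'k::comm_ring_1^'n^'n. linf p (A *v y)) \<in> polyfun mat_coords"
  unfolding linf_def by (intro pf_sum pf_mult pf_mat_mv polyfun.const) auto

lemma pf_q1: "(\<lambda>(a::'k::comm_ring_1,b::'k,c::'k,d::'k). a) \<in> polyfun quad_coords"
  by (rule polyfun.coord) (auto simp: quad_coords_def)
lemma pf_q2: "(\<lambda>(a::'k::comm_ring_1,b::'k,c::'k,d::'k). b) \<in> polyfun quad_coords"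
  by (rule polyfun.coord) (auto simp: quad_coords_def)
lemma pf_q3: "(\<lambda>(a::'k::comm_ring_1,b::'k,c::'k,d::'k). c) \<in> polyfun quad_coords"
  by (rule polyfun.coord) (auto simp: quad_coords_def)
lemma pf_q4: "(\<lambda>(a::'k::comm_ring_1,b::'k,c::'k,d::'k). d) \<in> polyfun quad_coords"
  by (rule polyfun.coord) (auto simp: quad_coords_def)

lemma pf_pp: "(\<lambda>(a::'k::comm_ring_1,b::'k,c::'k,d::'k). (a *s u1 + b *s u2) $ i) \<in> polyfun quad_coords"
proof -
  have "(\<lambda>x. (\<lambda>(a::'k,b::'k,c::'k,d::'k). a) x * u1 $ i + (\<lambda>(a::'k,b::'k,c::'k,d::'k). b) x * u2 $ i) \<in> polyfun quad_coords"
    by (intro polyfun.add pf_mult pf_q1 pf_q2 polyfun.const)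
  then show ?thesis by (simp add: case_prod_unfold)
qed

lemma pf_qq: "(\<lambda>(a::'k::comm_ring_1,b::'k,c::'k,d::'k). rnc_pt w m c d $ i) \<in> polyfun quad_coords"
proof -
  have "(\<lambda>x. \<Sum>j\<le>m. ((\<lambda>(a::'k,b::'k,c::'k,d::'k). c) x ^ (m - j) * (\<lambda>(a::'k,b::'k,c::'k,d::'k). d) x ^ j) * w j $ i) \<in> polyfun quad_coords"
    by (intro pf_sum pf_mult pf_pow pf_q3 pf_q4 polyfun.const) auto
  then show ?thesis by (simp add: case_prod_unfold rnc_pt_def)
qed

lemma pf_mat_line: "f \<in> polyfun mat_coords \<Longrightarrow> \<exists>P. \<forall>t. f (smult_mat t B) = poly P t"
proof (induction rule: polyfun.induct)
  case (const c) then show ?case by (rule exI[of _ "[:c:]"]) simp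
next
  case (coord f)
  then obtain i j where f: "f = (\<lambda>A. A$i$j)" by (auto simp: mat_coords_def)
  show ?case by (rule exI[of _ "[:0, B$i$j:]"]) (simp add: f smult_mat_def)
next
  case (add f g)
  then obtain P Q where "\<forall>t. f (smult_mat t B) = poly P t" "\<forall>t. g (smult_mat t B) = poly Q t" by blast
  then show ?case by (intro exI[of _ "P + Q"]) simp
next
  case (mult f g)
  then obtain P Q where "\<forall>t. f (smult_mat t B) = poly P t" "\<forall>t. g (smult_mat t B) = poly Q t" by blast
  then show ?case by (intro exI[of _ "P * Q"]) simp
qed



definition Pc :: "nat \<Rightarrow> (nat \<Rightarrow> 'k::comm_ring_1) \<Rightarrow> 'k poly" where
  "Pc d f = (\<Sum>j\<le>d. monom (f j) (d - j))"

lemma poly_Pc: "poly (Pc d f) t = (\<Sum>j\<le>d. t^(d-j) * 1^j * f j)"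
  by (simp add: Pc_def poly_sum poly_monom mult.commute)

lemma coeff_Pc: "i \<le> d \<Longrightarrow> coeff (Pc d f) (d - i) = f i"
proof -
  assume i: "i \<le> d"
  have "coeff (Pc d f) (d - i) = (\<Sum>j\<le>d. if j = i then f j else 0)"
    unfolding Pc_def coeff_sum coeff_monom
    by (rule sum.cong) (use i in auto)
  also have "\<dots> = f i" using i by simp
  finally show ?thesis .
qed

lemma rnc_poly_zero:
  fixes \<beta> \<gamma> :: "nat \<Rightarrow> 'k::field_char_0"
  assumes ex: "(\<Sum>j\<le>d. cz^(d-j)*ez^j*\<gamma> j) \<noteq> 0"
    and imp: "\<And>c e. (\<Sum>j\<le>d. c^(d-j)*e^j*\<gamma> j) \<noteq> 0 \<Longrightarrow> (\<Sum>j\<le>d. c^(d-j)*e^j*\<beta> j) = 0"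
    and i: "i \<le> d"
  shows "\<beta> i = 0"
proof -
  have "Pc d \<gamma> \<noteq> 0"
  proof
    assume "Pc d \<gamma> = 0"
    then have "\<gamma> j = 0" if "j \<le> d" for j using coeff_Pc[OF that, of \<gamma>] by simp
    then show False using ex by simp
  qed
  then have fin: "finite {t. poly (Pc d \<gamma>) t = 0}" by (rule poly_roots_finite)
  have "{t. poly (Pc d \<gamma>) t \<noteq> 0} \<subseteq> {t. poly (Pc d \<beta>) t = 0}"
  proof
    fix t assume "t \<in> {t. poly (Pc d \<gamma>) t \<noteq> 0}"
    then show "t \<in> {t. poly (Pc d \<beta>) t = 0}" using imp[of t 1] unfolding poly_Pc by simp
  qed
  moreover have "infinite {t. poly (Pc d \<gamma>) t \<noteq> 0}"
  proof
    assume "finite {t. poly (Pc d \<gamma>) t \<noteq> 0}"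
    from finite_UnI[OF this fin] have "finite ({t. poly (Pc d \<gamma>) t \<noteq> 0} \<union> {t. poly (Pc d \<gamma>) t = 0})" .
    moreover have "({t. poly (Pc d \<gamma>) t \<noteq> 0} \<union> {t. poly (Pc d \<gamma>) t = 0}) = (UNIV::'k set)" by auto
    ultimately have "finite (UNIV::'k set)" by simp
    then show False using infinite_UNIV_char_0[where 'a='k] by blast
  qed
  ultimately have "infinite {t. poly (Pc d \<beta>) t = 0}" using finite_subset by auto
  then have "Pc d \<beta> = 0" using poly_roots_finite[of "Pc d \<beta>"] by auto
  then show ?thesis using coeff_Pc[OF i, of \<beta>] by simp
qed

lemma rnc_poly_zero0:
  fixes \<beta> :: "nat \<Rightarrow> 'k::field_char_0"
  assumes "\<And>c e. (\<Sum>j\<le>d. c^(d-j)*e^j*\<beta> j) = 0" and "i \<le> d"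
  shows "\<beta> i = 0"
proof -
  have "\<forall>t. poly (Pc d \<beta>) t = 0"
  proof
    fix t show "poly (Pc d \<beta>) t = 0" unfolding poly_Pc by (rule assms(1))
  qed
  then have "Pc d \<beta> = 0" by (simp only: poly_all_0_iff_0)
  then show ?thesis using coeff_Pc[OF assms(2), of \<beta>] by simp
qed



lemma linf_comm: "linf x y = linf y x"
  by (simp add: linf_def mult.commute)

lemma decomp:
  fixes h u0 v :: "'k::field^'n"
  assumes "linf h u0 \<noteq> 0"
  shows "linf h (v - (linf h v / linf h u0) *s u0) = 0"
proof -
  define t where "t = linf h v / linf h u0"
  have e2: "linf h (v - t *s u0) = linf h v - t * linf h u0"
    by (simp add: linf_def sum_subtractf right_diff_distrib sum_distrib_left mult.left_commute)
  have e3: "t * linf h u0 = linf h v" using assms by (simp add: t_def)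
  show ?thesis unfolding t_def[symmetric] e2 e3 by simp
qed

lemma kill_mat:
  fixes A :: "'k::field^'n^'n"
  assumes sp: "vec.span (w ` S) = {v. linf h v = 0}" and u0: "linf h u0 \<noteq> 0"
    and "A *v u0 = 0" and wj: "\<And>j. j\<in>S \<Longrightarrow> A *v w j = 0"
  shows "A = 0"
proof -
  have "A *v v = 0 *v v" for v
  proof -
    let ?t = "linf h v / linf h u0"
    have "v - ?t *s u0 \<in> vec.span (w ` S)" using decomp[OF u0] sp by blast
    then have "A *v (v - ?t *s u0) = 0" using span_mv wj by blast
    then show ?thesis using assms(3) by (simp add: matrix_vector_mult_diff_distrib mv_smult)
  qed
  then show ?thesis using matrix_eq by blast
qed

lemma kill_lin:
  fixes y :: "'k::field^'n"
  assumes sp: "vec.span (w ` S) = {v. linf h v = 0}" and u0: "linf h u0 \<noteq> 0"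
    and "linf y u0 = 0" and wj: "\<And>j. j\<in>S \<Longrightarrow> linf y (w j) = 0"
  shows "y = 0"
proof (rule linf_all_zero)
  fix v
  let ?t = "linf h v / linf h u0"
  have "v - ?t *s u0 \<in> vec.span (w ` S)" using decomp[OF u0] sp by blast
  then have "linf y (v - ?t *s u0) = 0" using span_linf wj by blast
  moreover have "linf y (v - ?t *s u0) = linf y v - ?t * linf y u0"
    by (simp add: linf_def sum_subtractf right_diff_distrib sum_distrib_left mult.left_commute)
  ultimately have "linf y v = 0" using assms(3) by simp
  then show "linf v y = 0" by (simp add: linf_comm)
qed

lemma zl_gen:
  fixes A :: "'k::field_char_0^'n^'n"
  assumes "symmetric_mat A" "qf A p = 0" "qf A q = 0"
  shows "line_span p q \<subseteq> zeroset A \<longleftrightarrow> linf p (A *v q) = 0"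
proof
  assume "line_span p q \<subseteq> zeroset A"
  moreover have "1 *s p + 1 *s q \<in> line_span p q" unfolding line_span_def by blast
  ultimately have "qf A (1 *s p + 1 *s q) = 0" by (auto simp: zeroset_def)
  then show "linf p (A *v q) = 0" using qf_comb[OF assms(1), of 1 p 1 q] assms by simp
next
  assume "linf p (A *v q) = 0"
  then show "line_span p q \<subseteq> zeroset A"
    using qf_comb[OF assms(1)] assms by (auto simp: line_span_def zeroset_def)
qed

lemma concl_lemma:
  fixes V :: "('k::field_char_0^'n^'n) set"
  assumes sym: "\<And>A. A\<in>V \<Longrightarrow> symmetric_mat A" and qp: "\<And>A. A\<in>V \<Longrightarrow> qf A p = 0"
    and qq: "\<And>A. A\<in>V \<Longrightarrow> qf A q = 0"
    and I: "\<exists>A\<in>V. linf p (A *v q) \<noteq> 0"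
    and II: "{A\<in>V. line_span p q \<subseteq> zeroset A} \<subseteq> {0} \<or>
       (\<exists>A\<in>V. line_span p q \<subseteq> zeroset A \<and> (\<exists>z\<in>line_span p q. \<exists>k. (A *v z)$k \<noteq> 0))"
  shows "general_in V (\<lambda>A. \<not> line_span p q \<subseteq> zeroset A) \<and>
    general_in {A\<in>V. line_span p q \<subseteq> zeroset A} (\<lambda>A. \<not> line_span p q \<subseteq> sing A)"
proof
  show "general_in V (\<lambda>A. \<not> line_span p q \<subseteq> zeroset A)"
    unfolding general_in_def
  proof (intro bexI[of _ "\<lambda>A. linf p (A *v q)"] conjI)
    show "(\<lambda>A. linf p (A *v q)) \<in> polyfun mat_coords" by (rule pf_mat_phi)
    show "V \<subseteq> {0} \<or> (\<exists>A\<in>V. linf p (A *v q) \<noteq> 0)" by (rule disjI2) (rule I)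
    show "\<forall>A\<in>V. A \<noteq> 0 \<longrightarrow> linf p (A *v q) \<noteq> 0 \<longrightarrow> \<not> line_span p q \<subseteq> zeroset A"
    proof (intro ballI impI)
      fix A assume A: "A \<in> V" "linf p (A *v q) \<noteq> 0"
      show "\<not> line_span p q \<subseteq> zeroset A" using zl_gen[OF sym[OF A(1)] qp[OF A(1)] qq[OF A(1)]] A(2) by simp
    qed
  qed
  show "general_in {A\<in>V. line_span p q \<subseteq> zeroset A} (\<lambda>A. \<not> line_span p q \<subseteq> sing A)"
    using II
  proof
    assume "{A\<in>V. line_span p q \<subseteq> zeroset A} \<subseteq> {0}"
    note W0 = this
    show ?thesis unfolding general_in_def
    proof (intro bexI[of _ "\<lambda>_. 1"] polyfun.const conjI disjI1 W0 ballI impI)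
      fix A assume "A \<in> {A\<in>V. line_span p q \<subseteq> zeroset A}" "A \<noteq> 0"
      then show "\<not> line_span p q \<subseteq> sing A" using W0 by auto
    qed
  next
    assume "\<exists>A\<in>V. line_span p q \<subseteq> zeroset A \<and> (\<exists>z\<in>line_span p q. \<exists>k. (A *v z)$k \<noteq> 0)"
    then obtain A where A12: "A\<in>V" "line_span p q \<subseteq> zeroset A" and "\<exists>z\<in>line_span p q. \<exists>k. (A *v z)$k \<noteq> 0"
      by blast
    then obtain z k where "z\<in>line_span p q" "(A *v z)$k \<noteq> 0" by (elim bexE exE)
    note A = A12 this
    show ?thesis unfolding general_in_def
    proof (intro bexI[of _ "\<lambda>A. (A *v z)$k"] conjI)
      show "(\<lambda>A. (A *v z)$k) \<in> polyfun mat_coords" by (rule pf_mat_mv)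
      show "{A\<in>V. line_span p q \<subseteq> zeroset A} \<subseteq> {0} \<or> (\<exists>A\<in>{A\<in>V. line_span p q \<subseteq> zeroset A}. (A *v z)$k \<noteq> 0)"
        using A(1,2,4) by (intro disjI2 bexI[of _ A]) simp_all
      show "\<forall>A\<in>{A\<in>V. line_span p q \<subseteq> zeroset A}. A \<noteq> 0 \<longrightarrow> (A *v z)$k \<noteq> 0 \<longrightarrow> \<not> line_span p q \<subseteq> sing A"
      proof (intro ballI impI)
        fix B assume "(B *v z)$k \<noteq> 0"
        then have "z \<notin> sing B" by (auto simp: sing_def)
        then show "\<not> line_span p q \<subseteq> sing B" using A(3) by blast
      qed
    qed
  qed
qed



theorem lemma5p5:
  fixes h u1 u2 :: "'k::field_char_0 ^'n"
    and w :: "nat \<Rightarrow> 'k ^'n"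
    and V :: "('k ^'n^'n) set"
  assumes alg_closed: "alg_closed_field TYPE('k)"
    and L_line: "indep2 u1 u2"
    and H_nonzero: "h \<noteq> 0"
    and transverse: "\<not> line_span u1 u2 \<subseteq> {v. linf h v = 0}"
    and R_basis: "vec.independent (w ` {..CARD('n) - 2})" "inj_on w {..CARD('n) - 2}"
      "vec.span (w ` {..CARD('n) - 2}) = {v. linf h v = 0}"
    and V_subspace: "0 \<in> V" "\<And>A B. A \<in> V \<Longrightarrow> B \<in> V \<Longrightarrow> A + B \<in> V"
      "\<And>c A. A \<in> V \<Longrightarrow> smult_mat c A \<in> V"
    and V_symmetric: "\<And>A. A \<in> V \<Longrightarrow> symmetric_mat A"
    and V_contains: "\<And>A. A \<in> V \<Longrightarrow> line_span u1 u2 \<union> rnc_set w (CARD('n) - 2) \<subseteq> zeroset A"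
    and V_nonzero: "\<exists>A\<in>V. A \<noteq> 0"
    and hyp_a: "\<And>A. A \<in> V \<Longrightarrow> A \<noteq> 0 \<Longrightarrow> \<not> {v. linf h v = 0} \<subseteq> zeroset A"
    and hyp_b: "general_in V (\<lambda>A. \<not> line_span u1 u2 \<subseteq> sing A)"
  shows "general_param (\<lambda>(a, b, c, d).
           let p = a *s u1 + b *s u2; q = rnc_pt w (CARD('n) - 2) c d in
           (a, b) \<noteq> (0, 0) \<longrightarrow> (c, d) \<noteq> (0, 0) \<longrightarrow> indep2 p q \<longrightarrow>
             general_in V (\<lambda>A. \<not> line_span p q \<subseteq> zeroset A) \<and>
             general_in {A \<in> V. line_span p q \<subseteq> zeroset A} (\<lambda>A. \<not> line_span p q \<subseteq> sing A))"
proof -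
  define d where "d = CARD('n) - 2"
  define P where "P = (\<lambda>x::'k\<times>'k\<times>'k\<times>'k. fst x *s u1 + fst (snd x) *s u2)"
  define Q where "Q = (\<lambda>x::'k\<times>'k\<times>'k\<times>'k. rnc_pt w d (fst (snd (snd x))) (snd (snd (snd x))))"
  define Phi where "Phi = (\<lambda>A x. linf (P x) (A *v Q x))"
  define Concl where "Concl = (\<lambda>p q. general_in V (\<lambda>A. \<not> line_span p q \<subseteq> zeroset A) \<and>
             general_in {A \<in> V. line_span p q \<subseteq> zeroset A} (\<lambda>A. \<not> line_span p q \<subseteq> sing A))"
  have PL: "P x \<in> line_span u1 u2" for x unfolding P_def line_span_def by blast
  have QR: "Q x \<in> rnc_set w (CARD('n) - 2)" for x unfolding Q_def rnc_set_def d_def by blast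
  have qP: "qf A (P x) = 0" if "A \<in> V" for A x
    using V_contains[OF that] PL[of x] by (auto simp: zeroset_def)
  have qQ: "qf A (Q x) = 0" if "A \<in> V" for A x
    using V_contains[OF that] QR[of x] by (auto simp: zeroset_def)
  have zl: "line_span (P x) (Q x) \<subseteq> zeroset A \<longleftrightarrow> Phi A x = 0" if "A \<in> V" for A x
    unfolding Phi_def by (rule zl_gen[OF V_symmetric[OF that] qP[OF that] qQ[OF that]])
  obtain u0 where u0: "u0 \<in> line_span u1 u2" "linf h u0 \<noteq> 0" using transverse by auto
  then obtain \<alpha> \<beta> where u0e: "u0 = \<alpha> *s u1 + \<beta> *s u2" by (auto simp: line_span_def)
  have Hspan: "vec.span (w ` {..d}) = {v. linf h v = 0}" using R_basis(3) by (simp add: d_def)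
  have killM: "A = 0" if "A *v u1 = 0" "A *v u2 = 0" "\<And>j. j \<le> d \<Longrightarrow> A *v w j = 0" for A :: "'k^'n^'n"
  proof (rule kill_mat[OF Hspan u0(2)])
    show "A *v u0 = 0" using that by (simp add: u0e matrix_vector_right_distrib mv_smult)
    show "\<And>j. j \<in> {..d} \<Longrightarrow> A *v w j = 0" using that by simp
  qed
  have sym: "symmetric_mat A" if "A \<in> V" for A using V_symmetric that .
  have P10: "P (1,0,c,e) = u1" for c e by (simp add: P_def)
  have P01: "P (0,1,c,e) = u2" for c e by (simp add: P_def)
  have Phi_rnc: "Phi A (a,b,c,e) = (\<Sum>j\<le>d. c^(d-j)*e^j * linf (a *s u1 + b *s u2) (A *v w j))" for A a b c e
    by (simp add: Phi_def P_def Q_def rnc_linf)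
  have "\<exists>A0\<in>V. \<exists>x0. Phi A0 x0 \<noteq> 0"
  proof (rule ccontr)
    assume "\<not> (\<exists>A0\<in>V. \<exists>x0. Phi A0 x0 \<noteq> 0)"
    then have all0: "Phi A x = 0" if "A \<in> V" for A x using that by blast
    have Lsing: "line_span u1 u2 \<subseteq> sing A" if A: "A \<in> V" for A
    proof -
      have lw: "linf (a *s u1 + b *s u2) (A *v w j) = 0" if "j \<le> d" for a b j
      proof (rule rnc_poly_zero0[OF _ that])
        fix c e show "(\<Sum>j\<le>d. c^(d-j)*e^j * linf (a *s u1 + b *s u2) (A *v w j)) = 0"
          using all0[OF A, of "(a,b,c,e)"] Phi_rnc by simp
      qed
      have q1: "qf A u1 = 0" using qP[OF A, of "(1,0,0,0)"] by (simp add: P10)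
      have q2: "qf A u2 = 0" using qP[OF A, of "(0,1,0,0)"] by (simp add: P01)
      have "qf A (1 *s u1 + 1 *s u2) = 0" using qP[OF A, of "(1,1,0,0)"] by (simp add: P_def)
      then have q12: "linf u1 (A *v u2) = 0" using qf_comb[OF sym[OF A], of 1 u1 1 u2] q1 q2 by simp
      have k1: "A *v u1 = 0"
      proof (rule kill_lin[OF Hspan u0(2)])
        show "linf (A *v u1) u0 = 0"
          using q1 q12 sym_swap[OF sym[OF A], of u1 u2]
          by (simp add: linf_comm[of "A *v u1"] sym_swap[OF sym[OF A], of u0 u1] u0e
              matrix_vector_right_distrib mv_smult linf_add_right linf_smult_right qf_linf)
        fix j assume "j \<in> {..d}"
        then show "linf (A *v u1) (w j) = 0"
          using lw[of j 1 0] by (simp add: linf_comm[of "A *v u1"] sym_swap[OF sym[OF A], of "w j" u1])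
      qed
      have k2: "A *v u2 = 0"
      proof (rule kill_lin[OF Hspan u0(2)])
        show "linf (A *v u2) u0 = 0"
          using q2 q12 sym_swap[OF sym[OF A], of u1 u2]
          by (simp add: linf_comm[of "A *v u2"] sym_swap[OF sym[OF A], of u0 u2] u0e
              matrix_vector_right_distrib mv_smult linf_add_right linf_smult_right qf_linf)
        fix j assume "j \<in> {..d}"
        then show "linf (A *v u2) (w j) = 0"
          using lw[of j 0 1] by (simp add: linf_comm[of "A *v u2"] sym_swap[OF sym[OF A], of "w j" u2])
      qed
      show ?thesis
        using k1 k2 by (auto simp: line_span_def sing_def matrix_vector_right_distrib mv_smult)
    qed
    obtain f where f: "f \<in> polyfun mat_coords" "V \<subseteq> {0} \<or> (\<exists>A\<in>V. f A \<noteq> 0)"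
      "\<forall>A\<in>V. A \<noteq> 0 \<longrightarrow> f A \<noteq> 0 \<longrightarrow> \<not> line_span u1 u2 \<subseteq> sing A"
      using hyp_b unfolding general_in_def by (elim bexE conjE) (rule that)
    obtain A1 where A1: "A1 \<in> V" "A1 \<noteq> 0" using V_nonzero by blast
    then have "\<not> V \<subseteq> {0}" by blast
    then obtain A where A: "A \<in> V" "f A \<noteq> 0" using f(2) by blast
    have "\<exists>B\<in>V. B \<noteq> 0 \<and> f B \<noteq> 0"
    proof (cases "A = 0")
      case False then show ?thesis using A by blast
    next
      case True
      obtain Pp where Pp: "\<And>t. f (smult_mat t A1) = poly Pp t" using pf_mat_line[OF f(1)] by blast
      have "smult_mat 0 A1 = 0" by (simp add: smult_mat_def vec_eq_iff)
      then have "poly Pp 0 \<noteq> 0" using A True Pp[of 0] by simp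
      then have "Pp \<noteq> 0" by auto
      then have "finite ({t. poly Pp t = 0} \<union> {0})" using poly_roots_finite by blast
      then have "\<exists>t. t \<notin> {t. poly Pp t = 0} \<union> {0}"
        by (rule ex_new_if_finite[OF infinite_UNIV_char_0])
      then obtain t where t: "t \<notin> {t. poly Pp t = 0} \<union> {0}" by (elim exE)
      have "smult_mat t A1 \<noteq> 0"
      proof
        assume z: "smult_mat t A1 = 0"
        have "t * A1$i$j = 0" for i j
        proof -
          have "smult_mat t A1 $ i $ j = 0" using z by simp
          then show ?thesis by (simp add: smult_mat_def)
        qed
        then have "A1 = 0" using t by (simp add: vec_eq_iff)
        then show False using A1 by simp
      qed
      moreover have "f (smult_mat t A1) \<noteq> 0" using t Pp by simp
      ultimately show ?thesis using V_subspace(3)[OF A1(1)] by blast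
    qed
    then obtain B where "B \<in> V" "B \<noteq> 0" "f B \<noteq> 0" by blast
    then show False using f(3) Lsing[OF \<open>B \<in> V\<close>] by auto
  qed
  then obtain A0 x0 where A0: "A0 \<in> V" "Phi A0 x0 \<noteq> 0" by blast
  define G where "G = (\<lambda>Z A1 k x. Phi A1 x * (A0 *v Z x)$k - Phi A0 x * (A1 *v Z x)$k)"
  have pfP: "(\<lambda>x. P x $ i) \<in> polyfun quad_coords" for i
  proof -
    have "(\<lambda>x. P x $ i) = (\<lambda>(a,b,c,d). (a *s u1 + b *s u2) $ i)"
      unfolding P_def by (auto simp: fun_eq_iff split: prod.split)
    then show ?thesis using pf_pp by simp
  qed
  have pfQ: "(\<lambda>x. Q x $ i) \<in> polyfun quad_coords" for i
  proof -
    have "(\<lambda>x. Q x $ i) = (\<lambda>(a,b,c,e). rnc_pt w d c e $ i)"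
      unfolding Q_def by (auto simp: fun_eq_iff split: prod.split)
    then show ?thesis using pf_qq by simp
  qed
  have pfPhi: "(\<lambda>x. Phi A x) \<in> polyfun quad_coords" for A
    unfolding Phi_def by (rule pf_linf[OF pfP pf_mv[OF pfQ]])
  have pfG: "(\<lambda>x. G Z A1 k x) \<in> polyfun quad_coords" if "Z \<in> {P, Q}" for Z A1 k
  proof -
    have pfZ: "(\<lambda>x. Z x $ i) \<in> polyfun quad_coords" for i using that pfP pfQ by auto
    show ?thesis unfolding G_def
      by (intro pf_diff pf_mult pfPhi pf_mv pfZ)
  qed
  have fin: "?thesis" if g: "g \<in> polyfun quad_coords" "g x1 \<noteq> 0" "\<And>x. g x \<noteq> 0 \<Longrightarrow> Concl (P x) (Q x)" for g x1
    unfolding general_param_def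
  proof (intro bexI[OF _ g(1)] conjI allI impI)
    show "\<exists>x. g x \<noteq> 0" using g(2) by blast
    fix x assume "g x \<noteq> 0"
    then have "Concl (P x) (Q x)" by (rule g(3))
    then show "(\<lambda>(a, b, c, d).
           let p = a *s u1 + b *s u2; q = rnc_pt w (CARD('n) - 2) c d in
           (a, b) \<noteq> (0, 0) \<longrightarrow> (c, d) \<noteq> (0, 0) \<longrightarrow> indep2 p q \<longrightarrow>
             general_in V (\<lambda>A. \<not> line_span p q \<subseteq> zeroset A) \<and>
             general_in {A \<in> V. line_span p q \<subseteq> zeroset A} (\<lambda>A. \<not> line_span p q \<subseteq> sing A)) x"
      by (cases x) (simp add: Concl_def P_def Q_def d_def Let_def)
  qed
  have concl: "Concl (P x) (Q x)" if I: "\<exists>A\<in>V. Phi A x \<noteq> 0"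
    and II: "{A\<in>V. line_span (P x) (Q x) \<subseteq> zeroset A} \<subseteq> {0} \<or>
       (\<exists>A\<in>V. line_span (P x) (Q x) \<subseteq> zeroset A \<and> (\<exists>z\<in>line_span (P x) (Q x). \<exists>k. (A *v z)$k \<noteq> 0))" for x
    unfolding Concl_def
    by (rule concl_lemma[OF sym qP qQ]) (use I II in \<open>simp_all add: Phi_def\<close>)
  have Phi_lin: "Phi (smult_mat a A + smult_mat b B) x = a * Phi A x + b * Phi B x" for a b A B x
    by (simp add: Phi_def matrix_vector_mult_add_rdistrib smult_mat_mv linf_add_right linf_smult_right)
  have mv_lin: "(smult_mat a A + smult_mat b B) *v z = a *s (A *v z) + b *s (B *v z)" for a b A B z
    by (simp add: matrix_vector_mult_add_rdistrib smult_mat_mv)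
  show ?thesis
  proof (cases "\<exists>Z\<in>{P,Q}. \<exists>A1\<in>V. \<exists>k x. G Z A1 k x \<noteq> 0")
    case True
    then obtain Z A1 k x1 where Z: "Z \<in> {P,Q}" "A1 \<in> V" "G Z A1 k x1 \<noteq> 0" by blast
    have ZL: "Z x \<in> line_span (P x) (Q x)" for x
    proof -
      have "P x = 1 *s P x + 0 *s Q x" "Q x = 0 *s P x + 1 *s Q x" by simp_all
      then show ?thesis using Z(1) unfolding line_span_def by blast
    qed
    show ?thesis
    proof (rule fin[OF pfG[OF Z(1)] Z(3)])
      fix x assume gx: "G Z A1 k x \<noteq> 0"
      define A where "A = smult_mat (Phi A1 x) A0 + smult_mat (- Phi A0 x) A1"
      have AV: "A \<in> V" unfolding A_def using V_subspace A0(1) Z(2) by blast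
      have "Phi A x = 0" unfolding A_def Phi_lin by (simp add: mult.commute)
      then have Az: "line_span (P x) (Q x) \<subseteq> zeroset A" using zl[OF AV] by simp
      have "(A *v Z x)$k = G Z A1 k x" unfolding A_def mv_lin G_def by simp
      then have Ak: "(A *v Z x)$k \<noteq> 0" using gx by simp
      have I: "\<exists>A\<in>V. Phi A x \<noteq> 0"
      proof (rule ccontr)
        assume "\<not> (\<exists>A\<in>V. Phi A x \<noteq> 0)"
        then have "Phi A0 x = 0" "Phi A1 x = 0" using A0(1) Z(2) by auto
        then have "G Z A1 k x = 0" by (simp add: G_def)
        then show False using gx by simp
      qed
      show "Concl (P x) (Q x)"
        by (rule concl[OF I]) (use AV Az ZL Ak in blast)
    qed
  next
    case False
    have C2: "\<And>Z A1 k x. Z \<in> {P,Q} \<Longrightarrow> A1 \<in> V \<Longrightarrow> Phi A1 x * (A0 *v Z x)$k = Phi A0 x * (A1 *v Z x)$k"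
    proof -
      fix Z A1 k x assume "Z \<in> {P,Q}" "A1 \<in> V"
      then have "\<not> (G Z A1 k x \<noteq> 0)" using False by blast
      then show "Phi A1 x * (A0 *v Z x)$k = Phi A0 x * (A1 *v Z x)$k" by (simp add: G_def)
    qed
    show ?thesis
    proof (rule fin[OF pfPhi A0(2)])
      fix x assume x0: "Phi A0 x \<noteq> 0"
      obtain a b c e where xe: "x = (a,b,c,e)" by (cases x) auto
      have W0: "A = 0" if AV: "A \<in> V" and Az: "line_span (P x) (Q x) \<subseteq> zeroset A" for A
      proof -
        have PhA: "Phi A x = 0" using zl[OF AV] Az by simp
        have AP: "A *v P x = 0"
        proof -
          have "(A *v P x)$k = 0" for k using C2[of P A x k] AV PhA x0 by simp
          then show ?thesis by (simp add: vec_eq_iff)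
        qed
        have AQ: "A *v Q x = 0"
        proof -
          have "(A *v Q x)$k = 0" for k using C2[of Q A x k] AV PhA x0 by simp
          then show ?thesis by (simp add: vec_eq_iff)
        qed
        have claim1: "A *v (a' *s u1 + b' *s u2) = 0" if "Phi A0 (a',b',c,e) \<noteq> 0" for a' b'
        proof -
          have "Q (a',b',c,e) = Q x" by (simp add: Q_def xe)
          then have "Phi A (a',b',c,e) = 0" by (simp add: Phi_def AQ)
          then have "(A *v P (a',b',c,e))$k = 0" for k using C2[of P A "(a',b',c,e)" k] AV that by simp
          then show ?thesis by (simp add: vec_eq_iff P_def)
        qed
        have Phi_add: "Phi A0 (a'+a'',b'+b'',c,e) = Phi A0 (a',b',c,e) + Phi A0 (a'',b'',c,e)" for a' b' a'' b''
          by (simp add: Phi_def P_def Q_def linf_add_left linf_smult_left algebra_simps)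
        have APx: "A *v (a *s u1 + b *s u2) = 0" using AP by (simp add: P_def xe)
        have Px0: "Phi A0 (a,b,c,e) \<noteq> 0" using x0 xe by simp
        have k1: "A *v u1 = 0"
        proof (cases "Phi A0 (1,0,c,e) \<noteq> 0")
          case True then show ?thesis using claim1[of 1 0] by simp
        next
          case False
          then have "Phi A0 (a+1,b+0,c,e) \<noteq> 0" using Phi_add[of a 1 b 0] Px0 by simp
          then have "A *v ((a+1) *s u1 + b *s u2) = 0" using claim1[of "a+1" b] by simp
          moreover have "(a+1) *s u1 + b *s u2 = (a *s u1 + b *s u2) + u1"
            by (simp add: vec_eq_iff algebra_simps)
          ultimately have "A *v ((a *s u1 + b *s u2) + u1) = 0" by (simp only:)
          then have "A *v (a *s u1 + b *s u2) + A *v u1 = 0" by (simp only: matrix_vector_right_distrib)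
          then show ?thesis by (simp only: APx add_0_left)
        qed
        have k2: "A *v u2 = 0"
        proof (cases "Phi A0 (0,1,c,e) \<noteq> 0")
          case True then show ?thesis using claim1[of 0 1] by simp
        next
          case False
          then have "Phi A0 (a+0,b+1,c,e) \<noteq> 0" using Phi_add[of a 0 b 1] Px0 by simp
          then have "A *v (a *s u1 + (b+1) *s u2) = 0" using claim1[of a "b+1"] by simp
          moreover have "a *s u1 + (b+1) *s u2 = (a *s u1 + b *s u2) + u2"
            by (simp add: vec_eq_iff algebra_simps)
          ultimately have "A *v ((a *s u1 + b *s u2) + u2) = 0" by (simp only:)
          then have "A *v (a *s u1 + b *s u2) + A *v u2 = 0" by (simp only: matrix_vector_right_distrib)
          then show ?thesis by (simp only: APx add_0_left)
        qed
        have claim2: "(A *v rnc_pt w d c' e')$k = 0" if "Phi A0 (a,b,c',e') \<noteq> 0" for c' e' k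
        proof -
          have "P (a,b,c',e') = P x" by (simp add: P_def xe)
          then have "Phi A (a,b,c',e') = linf (Q (a,b,c',e')) (A *v P x)"
            using sym_swap[OF sym[OF AV]] by (simp add: Phi_def)
          then have "Phi A (a,b,c',e') = 0" by (simp add: AP)
          then have "(A *v Q (a,b,c',e'))$k = 0" using C2[of Q A "(a,b,c',e')" k] AV that by simp
          then show ?thesis by (simp add: Q_def)
        qed
        have kw: "A *v w j = 0" if "j \<le> d" for j
        proof -
          have "(A *v w j)$k = 0" for k
          proof (rule rnc_poly_zero[where d=d and cz=c and ez=e and \<gamma>="\<lambda>j. linf (a *s u1 + b *s u2) (A0 *v w j)" and \<beta>="\<lambda>j. (A *v w j)$k", OF _ _ that])
            show "(\<Sum>j\<le>d. c^(d-j)*e^j * linf (a *s u1 + b *s u2) (A0 *v w j)) \<noteq> 0"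
              using Px0 Phi_rnc by simp
            fix c' e' assume "(\<Sum>j\<le>d. c'^(d-j)*e'^j * linf (a *s u1 + b *s u2) (A0 *v w j)) \<noteq> 0"
            then have "Phi A0 (a,b,c',e') \<noteq> 0" using Phi_rnc by simp
            then have "(A *v rnc_pt w d c' e')$k = 0" by (rule claim2)
            then show "(\<Sum>j\<le>d. c'^(d-j)*e'^j * (A *v w j)$k) = 0" by (simp add: rnc_comp)
          qed
          then show ?thesis by (simp add: vec_eq_iff)
        qed
        show ?thesis by (rule killM[OF k1 k2 kw])
      qed
      show "Concl (P x) (Q x)"
        by (rule concl) (use A0 x0 W0 in blast)+
    qed
  qed
qed


end
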